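(* Let $A$ be the structure matrix of a fully connected $L$-layer ReLU multilayer perceptron (as described in the context) with $m$ weights and $H$ hidden nodes. Then $\operatorname{rank}(A)=m-H$.
   Context: Network: fix $L\ge 2$ and integers $h_0=d,h_1,\dots,h_{L-1},h_L=K\ge 1$. Layer $l$ has nodes $O^l_1,\dots,O^l_{h_l}$; consecutive layers are fully connected by edges $O^{l-1}_i\to O^l_j$ carrying weights $w^l(i,j)$, with no biases, so there are $m=\sum_{l=1}^L h_{l-1}h_l$ edges/weights, indexed $1,\dots,m$. The hidden nodes are the nodes of layers $1,\dots,L-1$; their number is $H=\sum_{l=1}^{L-1}h_l$. Activations are ReLU, $\sigma(t)=\max(t,0)$. Paths and structure matrix: a path is a tuple $(i_0,\dots,i_L)$ with $i_l\in\{1,\dots,h_l\}$, i.e. a choice of one node per layer; it uses the $L$ edges $O^{l-1}_{i_{l-1}}\to O^l_{i_l}$. Represent a path by the vector $p\in\{0,1\}^m$ with $p_e=1$ iff edge $e$ is used by the path. The structure matrix $A$ is the $m\times n$ matrix whose columns are the vectors $p$ of all $n=\prod_{l=0}^L h_l$ paths, and its rank is the maximal number of linearly independent columns over $\mathbb{R}$. (The paper phrases this in the "generalized linear space" $(\mathbb{R}\setminus\{0\})^m$ with addition $w\oplus w'=(w_1w'_1,\dots,w_mw'_m)$ and scalar multiplication $\alpha\odot w=(\operatorname{sgn}(w_i)|w_i|^{\ln\alpha})_i$ for $\alpha>0$, encoding a path with entries $e$ on used edges and $1$ elsewhere; linear (in)dependence of path vectors there is the same as real linear (in)dependence of the corresponding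 $0/1$ vectors.) *)

theory Defs
  imports Complex_Main
begin

text \<open>Network with layer widths h 0, ..., h L. Nodes of layer l are indexed 0..h l - 1.
An edge O^{l-1}_i -> O^l_j is encoded as the triple (l, i, j) with 1 <= l <= L.\<close>

type_synonym edge = "nat \<times> nat \<times> nat"

definition edges :: "nat \<Rightarrow> (nat \<Rightarrow> nat) \<Rightarrow> edge set" where
  "edges L h = {(l, i, j). 1 \<le> l \<and> l \<le> L \<and> i < h (l - 1) \<and> j < h l}"

definition num_weights :: "nat \<Rightarrow> (nat \<Rightarrow> nat) \<Rightarrow> nat" where
  "num_weights L h = (\<Sum>l = 1..L. h (l - 1) * h l)"

definition num_hidden :: "nat \<Rightarrow> (nat \<Rightarrow> nat) \<Rightarrow> nat" where
  "num_hidden L h = (\<Sum>l = 1..L - 1. h l)"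

definition paths :: "nat \<Rightarrow> (nat \<Rightarrow> nat) \<Rightarrow> (nat \<Rightarrow> nat) set" where
  "paths L h = {p. (\<forall>l\<le>L. p l < h l) \<and> (\<forall>l>L. p l = 0)}"

definition path_vec :: "nat \<Rightarrow> (nat \<Rightarrow> nat) \<Rightarrow> edge \<Rightarrow> real" where
  "path_vec L p = (\<lambda>(l, i, j). if 1 \<le> l \<and> l \<le> L \<and> i = p (l - 1) \<and> j = p l then 1 else 0)"

definition structure_columns :: "nat \<Rightarrow> (nat \<Rightarrow> nat) \<Rightarrow> (edge \<Rightarrow> real) set" where
  "structure_columns L h = path_vec L ` paths L h"

definition lin_indep :: "(edge \<Rightarrow> real) set \<Rightarrow> bool" where
  "lin_indep S \<longleftrightarrow> finite S \<and>
     (\<forall>c. (\<forall>e. (\<Sum>v\<in>S. c v * v e) = 0) \<longrightarrow> (\<forall>v\<in>S. c v = 0))"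

definition structure_rank :: "nat \<Rightarrow> (nat \<Rightarrow> nat) \<Rightarrow> nat" where
  "structure_rank L h = Max {card S | S. S \<subseteq> structure_columns L h \<and> lin_indep S}"

end

theory Submission
  imports Defs "HOL-Library.Function_Algebras"
begin

definition sc :: "real \<Rightarrow> (edge \<Rightarrow> real) \<Rightarrow> (edge \<Rightarrow> real)" where
  "sc c f = (\<lambda>x. c * f x)"

interpretation V: vector_space sc
  by unfold_locales (auto simp: sc_def fun_eq_iff algebra_simps)

lemma sum_fun_apply: "(\<Sum>v\<in>t. (g v :: 'a \<Rightarrow> real)) x = (\<Sum>v\<in>t. g v x)"
  by (induction t rule: infinite_finite_induct) auto

definition P :: "edge \<Rightarrow> nat \<Rightarrow> nat" where
  "P e = (case e of (l, i, j) \<Rightarrow> (\<lambda>k. if k = l - 1 then i else if k = l then j else 0))"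

definition Iset :: "nat \<Rightarrow> (nat \<Rightarrow> nat) \<Rightarrow> edge set" where
  "Iset L h = {e \<in> edges L h. \<not> (fst e < L \<and> fst (snd e) = 0)}"

lemma edges_Sigma: "edges L h = Sigma {1..L} (\<lambda>l. {..<h (l - 1)} \<times> {..<h l})"
  by (auto simp: edges_def)

lemma finite_edges: "finite (edges L h)"
  by (simp add: edges_Sigma)

lemma card_edges: "card (edges L h) = num_weights L h"
  by (simp add: edges_Sigma num_weights_def card_cartesian_product)

lemma card_Iset:
  assumes "L \<ge> 2" "\<forall>l\<le>L. h l \<ge> 1"
  shows "card (Iset L h) = num_weights L h - num_hidden L h"
proof -
  define X where "X = Sigma {1..L-1} (\<lambda>l. {0::nat} \<times> {..<h l})"
  have I: "Iset L h = edges L h - X"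
    using assms by (auto simp: Iset_def X_def edges_def)
  have pos: "\<And>l. l \<le> L \<Longrightarrow> 0 < h l" using assms by fastforce
  have sub: "X \<subseteq> edges L h"
    using assms by (auto simp: X_def edges_def intro!: pos)
  have cX: "card X = num_hidden L h"
    by (simp add: X_def num_hidden_def card_cartesian_product)
  show ?thesis
    using I sub cX card_Diff_subset[OF finite_subset[OF sub finite_edges] sub]
    by (simp add: card_edges)
qed


lemma P_paths:
  assumes "\<forall>l\<le>L. h l \<ge> 1" "e \<in> edges L h"
  shows "P e \<in> paths L h"
  using assms by (auto simp: P_def paths_def edges_def Suc_le_eq)

lemma P_inj: "inj_on P (Iset L h)"
proof (rule inj_onI)
  fix e e' assume e: "e \<in> Iset L h" and e': "e' \<in> Iset L h" and eq: "P e = P e'"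
  obtain l i j where ed: "e = (l, i, j)" by (cases e) auto
  obtain l' i' j' where ed': "e' = (l', i', j')" by (cases e') auto
  have a: "P e (l - 1) = P e' (l - 1)" "P e l = P e' l" "P e (l' - 1) = P e' (l' - 1)" "P e l' = P e' l'"
    using eq by auto
  have l1: "1 \<le> l" "l \<le> L" "1 \<le> l'" "l' \<le> L" using e e' ed ed' by (auto simp: Iset_def edges_def)
  have c1: "l < L \<Longrightarrow> i \<noteq> 0" "l' < L \<Longrightarrow> i' \<noteq> 0" using e e' ed ed' by (auto simp: Iset_def)
  show "e = e'"
  proof (cases "l = l'")
    case True
    moreover have "l \<noteq> l - 1" using l1 by simp
    ultimately show ?thesis using a ed ed' by (auto simp: P_def)
  next
    case False
    show ?thesis
    proof (cases "l < l'")
      case True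
      have "P e (l - 1) = i" using ed by (simp add: P_def)
      moreover have "P e' (l - 1) = 0" using ed' True l1 by (auto simp: P_def)
      ultimately show ?thesis using a c1 True l1 by simp
    next
      case F2: False
      then have lt: "l' < l" using False by simp
      have "P e' (l' - 1) = i'" using ed' by (simp add: P_def)
      moreover have "P e (l' - 1) = 0" using ed lt l1 by (auto simp: P_def)
      ultimately show ?thesis using a c1 lt l1 by simp
    qed
  qed
qed

lemma path_vec_inj:
  assumes "L \<ge> 1"
  shows "inj_on (path_vec L) (paths L h)"
proof (rule inj_onI)
  fix p q assume p: "p \<in> paths L h" and q: "q \<in> paths L h" and eq: "path_vec L p = path_vec L q"
  have lev: "q (k - 1) = p (k - 1) \<and> q k = p k" if "1 \<le> k" "k \<le> L" for k
  proof -
    have "path_vec L p (k, p (k - 1), p k) = 1" using that by (simp add: path_vec_def)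
    then have "path_vec L q (k, p (k - 1), p k) = 1" using eq by simp
    then show ?thesis using that by (simp add: path_vec_def split: if_splits)
  qed
  show "p = q"
  proof
    fix k
    show "p k = q k"
    proof (cases "k = 0")
      case True then show ?thesis using lev[of 1] assms by simp
    next
      case False
      show ?thesis
      proof (cases "k \<le> L")
        case True then show ?thesis using lev[of k] False by simp
      next
        case False then show ?thesis using p q by (simp add: paths_def)
      qed
    qed
  qed
qed

definition W :: "nat \<Rightarrow> edge \<Rightarrow> edge \<Rightarrow> real" where
  "W L e = path_vec L (P e)"

lemma W_inj:
  assumes "L \<ge> 2" "\<forall>l\<le>L. h l \<ge> 1"
  shows "inj_on (W L) (Iset L h)"
proof -
  have sub: "P ` Iset L h \<subseteq> paths L h"
    using P_paths[OF assms(2)] by (auto simp: Iset_def)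
  have "inj_on (path_vec L) (P ` Iset L h)"
    using inj_on_subset[OF path_vec_inj sub] assms(1) by simp
  then have "inj_on (path_vec L \<circ> P) (Iset L h)"
    by (rule comp_inj_on[OF P_inj])
  moreover have "W L = path_vec L \<circ> P" by (simp add: fun_eq_iff W_def)
  ultimately show ?thesis by simp
qed

lemma eval_one:
  assumes "finite I" "e0 \<in> I" "W L e0 x = 1" "\<forall>e'\<in>I. e' \<noteq> e0 \<longrightarrow> d e' = 0 \<or> W L e' x = 0"
  shows "(\<Sum>e\<in>I. d e * W L e x) = d e0"
proof -
  have "(\<Sum>e\<in>I. d e * W L e x) = d e0 * W L e0 x + (\<Sum>e\<in>I - {e0}. d e * W L e x)"
    using assms by (simp add: sum.remove)
  also have "(\<Sum>e\<in>I - {e0}. d e * W L e x) = 0"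
    using assms(4) by (intro sum.neutral) auto
  finally show ?thesis using assms(3) by simp
qed

lemma Iset_mem:
  assumes "(l, i, j) \<in> Iset L h"
  shows "1 \<le> l" "l \<le> L" "i < h (l - 1)" "j < h l" "i = 0 \<Longrightarrow> l = L"
  using assms by (auto simp: Iset_def edges_def)

lemma finite_Iset: "finite (Iset L h)"
  using finite_edges by (simp add: Iset_def)

lemma if_ne0: "(if C then (1::real) else 0) \<noteq> 0 \<Longrightarrow> C" by (cases C) auto

lemma W_apply2: "W L e (k, a, b) = (if 1 \<le> k \<and> k \<le> L \<and> a = P e (k - 1) \<and> b = P e k then 1 else 0)"
  by (simp add: W_def path_vec_def)

lemma P_val: "1 \<le> l' \<Longrightarrow> P (l', i', j') l' = j'"
  "P (l', i', j') (l' - 1) = i'"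
  "k \<noteq> l' \<Longrightarrow> k \<noteq> l' - 1 \<Longrightarrow> P (l', i', j') k = 0"
  by (auto simp: P_def)

lemma W_nz:
  assumes "W L (l', i', j') (k, a, b) \<noteq> 0" "1 \<le> l'"
  shows "1 \<le> k \<and> k \<le> L \<and> (k = l' \<and> a = i' \<and> b = j' \<or> k = l' + 1 \<and> a = j' \<and> b = 0 \<or>
     k + 1 = l' \<and> a = 0 \<and> b = i' \<or> (k \<noteq> l' \<and> k \<noteq> l' + 1 \<and> k + 1 \<noteq> l' \<and> a = 0 \<and> b = 0))"
proof -
  have h: "1 \<le> k \<and> k \<le> L \<and> a = P (l', i', j') (k - 1) \<and> b = P (l', i', j') k"
    using assms(1) unfolding W_apply2 by (rule if_ne0)
  show ?thesis
  proof (cases "k = l'")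
    case True
    then have "k - 1 = l' - 1" by simp
    then have "a = i'" "b = j'" using h True assms(2) P_val(1,2) by metis+
    then show ?thesis using h True by blast
  next
    case F1: False
    show ?thesis
    proof (cases "k = l' + 1")
      case True
      then have "k - 1 = l'" "k \<noteq> l'" "k \<noteq> l' - 1" by arith+
      then have "a = j'" "b = 0" using h assms(2) P_val(1,3) by metis+
      then show ?thesis using h True by blast
    next
      case F2: False
      show ?thesis
      proof (cases "k + 1 = l'")
        case True
        then have "k - 1 \<noteq> l' - 1" "k - 1 \<noteq> l'" "k = l' - 1" using h by arith+
        then have "a = 0" "b = i'" using h P_val(2,3) by metis+
        then show ?thesis using h True by blast
      next
        case False
        then have "k - 1 \<noteq> l' - 1" "k - 1 \<noteq> l'" "k \<noteq> l' - 1" using F1 F2 h assms(2) by arith+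
        then have "a = 0" "b = 0" using h F1 P_val(3) by metis+
        then show ?thesis using h F1 F2 False by blast
      qed
    qed
  qed
qed

lemma W_diag: "1 \<le> l \<Longrightarrow> l \<le> L \<Longrightarrow> W L (l, i, j) (l, i, j) = 1"
  by (auto simp: W_apply2 P_def)

lemma indep_coeffs:
  assumes "L \<ge> 2" and z: "\<forall>x. (\<Sum>e\<in>Iset L h. d e * W L e x) = 0"
  shows "\<forall>e\<in>Iset L h. d e = 0"
proof -
  let ?I = "Iset L h"
  have A: "d (l, i, j) = 0" if m: "(l, i, j) \<in> ?I" "i \<noteq> 0" "j \<noteq> 0" for l i j
  proof -
    have "(\<Sum>e\<in>?I. d e * W L e (l, i, j)) = d (l, i, j)"
    proof (rule eval_one[OF finite_Iset m(1)])
      show "W L (l, i, j) (l, i, j) = 1" using Iset_mem[OF m(1)] by (simp add: W_diag)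
      show "\<forall>e'\<in>?I. e' \<noteq> (l, i, j) \<longrightarrow> d e' = 0 \<or> W L e' (l, i, j) = 0"
      proof (intro ballI impI)
        fix e' assume e': "e' \<in> ?I" "e' \<noteq> (l, i, j)"
        obtain l' i' j' where ed: "e' = (l', i', j')" by (cases e') auto
        have "1 \<le> l'" using Iset_mem e' ed by blast
        show "d e' = 0 \<or> W L e' (l, i, j) = 0"
        proof (rule ccontr)
          assume nz: "\<not> (d e' = 0 \<or> W L e' (l, i, j) = 0)"
          then have "W L (l', i', j') (l, i, j) \<noteq> 0" using ed by simp
          from W_nz[OF this \<open>1 \<le> l'\<close>] show False using m e' ed by auto
        qed
      qed
    qed
    then show ?thesis using z by simp
  qed
  have B: "d (l, i, 0) = 0" if m: "(l, i, 0) \<in> ?I" "i \<noteq> 0" for l i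
  proof -
    have "(\<Sum>e\<in>?I. d e * W L e (l, i, 0)) = d (l, i, 0)"
    proof (rule eval_one[OF finite_Iset m(1)])
      show "W L (l, i, 0) (l, i, 0) = 1" using Iset_mem[OF m(1)] by (simp add: W_diag)
      show "\<forall>e'\<in>?I. e' \<noteq> (l, i, 0) \<longrightarrow> d e' = 0 \<or> W L e' (l, i, 0) = 0"
      proof (intro ballI impI)
        fix e' assume e': "e' \<in> ?I" "e' \<noteq> (l, i, 0)"
        obtain l' i' j' where ed: "e' = (l', i', j')" by (cases e') auto
        have me: "(l', i', j') \<in> ?I" using e' ed by simp
        note mm = Iset_mem[OF me]
        show "d e' = 0 \<or> W L e' (l, i, 0) = 0"
        proof (rule ccontr)
          assume nz: "\<not> (d e' = 0 \<or> W L e' (l, i, 0) = 0)"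
          then have w: "W L (l', i', j') (l, i, 0) \<noteq> 0" using ed by simp
          have "l = l' + 1 \<and> j' = i"
            using W_nz[OF w mm(1)] e' ed m by auto
          then have "i' \<noteq> 0" "j' \<noteq> 0" using mm Iset_mem[OF m(1)] m by auto
          then have "d e' = 0" using A me ed by blast
          then show False using nz by simp
        qed
      qed
    qed
    then show ?thesis using z by simp
  qed
  have C: "d (L, 0, j) = 0" if m: "(L, 0, j) \<in> ?I" "j \<noteq> 0" for j
  proof -
    have "(\<Sum>e\<in>?I. d e * W L e (L, 0, j)) = d (L, 0, j)"
    proof (rule eval_one[OF finite_Iset m(1)])
      show "W L (L, 0, j) (L, 0, j) = 1" using Iset_mem[OF m(1)] by (simp add: W_diag)
      show "\<forall>e'\<in>?I. e' \<noteq> (L, 0, j) \<longrightarrow> d e' = 0 \<or> W L e' (L, 0, j) = 0"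
      proof (intro ballI impI)
        fix e' assume e': "e' \<in> ?I" "e' \<noteq> (L, 0, j)"
        obtain l' i' j' where ed: "e' = (l', i', j')" by (cases e') auto
        have me: "(l', i', j') \<in> ?I" using e' ed by simp
        note mm = Iset_mem[OF me]
        show "d e' = 0 \<or> W L e' (L, 0, j) = 0"
        proof (rule ccontr)
          assume nz: "\<not> (d e' = 0 \<or> W L e' (L, 0, j) = 0)"
          then have w: "W L (l', i', j') (L, 0, j) \<noteq> 0" using ed by simp
          from W_nz[OF w mm(1)] show False using e' ed m mm(2) by auto
        qed
      qed
    qed
    then show ?thesis using z by simp
  qed
  have D: "d e' = 0" if "e' \<in> ?I" "e' \<noteq> (L, 0, 0)" for e'
  proof -
    obtain l' i' j' where ed: "e' = (l', i', j')" by (cases e') auto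
    have me: "(l', i', j') \<in> ?I" using that ed by simp
    note mm = Iset_mem[OF me]
    show ?thesis
    proof (cases "i' = 0")
      case True
      then have "l' = L" using mm by simp
      then have "j' \<noteq> 0" using that ed True by auto
      then show ?thesis using C me ed True \<open>l' = L\<close> by simp
    next
      case False
      then show ?thesis using A B me ed by (cases "j' = 0") auto
    qed
  qed
  show ?thesis
  proof
    fix e assume e: "e \<in> ?I"
    show "d e = 0"
    proof (cases "e = (L, 0, 0)")
      case False then show ?thesis using D e by blast
    next
      case True
      have "(\<Sum>e\<in>?I. d e * W L e (L, 0, 0)) = d (L, 0, 0)"
      proof (rule eval_one[OF finite_Iset])
        show "(L, 0, 0) \<in> ?I" using e True by simp
        show "W L (L, 0, 0) (L, 0, 0) = 1" using assms(1) by (simp add: W_diag)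
        show "\<forall>e'\<in>?I. e' \<noteq> (L, 0, 0) \<longrightarrow> d e' = 0 \<or> W L e' (L, 0, 0) = 0"
          using D by blast
      qed
      then show ?thesis using z True by simp
    qed
  qed
qed

lemma P_Suc: "P (Suc t, i, j) m = (if m = t then i else if m = Suc t then j else 0)"
  by (simp add: P_def)

lemma step_id:
  "path_vec L (\<lambda>k. if k \<le> Suc t then p k else 0) x + path_vec L (P (Suc t, p t, 0)) x
   = path_vec L (\<lambda>k. if k \<le> t then p k else 0) x + path_vec L (P (Suc t, p t, p (Suc t))) x"
proof -
  obtain k a b where x: "x = (k, a, b)" by (cases x) auto
  show ?thesis
  proof (cases "1 \<le> k \<and> k \<le> L")
    case False then show ?thesis by (auto simp: x path_vec_def)
  next
    case True
    consider "k \<le> t" | "k = Suc t" | "k = Suc (Suc t)" | "k > Suc (Suc t)" by linarith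
    then show ?thesis
    proof cases
      case 1
      then have "k - 1 \<noteq> t" "k - 1 \<noteq> Suc t" "k \<noteq> Suc t" "k - 1 \<le> t" "k - 1 \<le> Suc t" "k \<le> Suc t" 
        using True by arith+
      then show ?thesis using 1 by (simp add: x path_vec_def P_Suc)
    next
      case 2
      then have "k - 1 = t" using True by arith
      then show ?thesis using 2 True by (simp add: x path_vec_def P_Suc)
    next
      case 3
      then have "k - 1 = Suc t" by arith
      then show ?thesis using 3 True by (simp add: x path_vec_def P_Suc)
    next
      case 4
      then have "k - 1 \<noteq> t" "k - 1 \<noteq> Suc t" "\<not> k - 1 \<le> Suc t" by arith+
      then show ?thesis using 4 True by (simp add: x path_vec_def P_Suc)
    qed
  qed
qed

lemma P_edges_in:
  assumes "L \<ge> 2" "\<forall>l\<le>L. h l \<ge> 1" "e \<in> edges L h"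
  shows "\<exists>e'\<in>Iset L h. P e' = P e"
proof -
  obtain l i j where ed: "e = (l, i, j)" by (cases e) auto
  have m: "1 \<le> l" "l \<le> L" "i < h (l - 1)" "j < h l" using assms(3) ed by (auto simp: edges_def)
  have pos: "\<And>l. l \<le> L \<Longrightarrow> 0 < h l" using assms(2) by fastforce
  show ?thesis
  proof (cases "i = 0 \<and> l < L")
    case False
    then have "e \<in> Iset L h" using assms(3) ed by (auto simp: Iset_def)
    then show ?thesis by blast
  next
    case True
    show ?thesis
    proof (cases "j = 0")
      case True
      have "(L, 0, 0) \<in> Iset L h" using pos[of L] pos[of "L - 1"] assms(1)
        by (auto simp: Iset_def edges_def)
      moreover have "P (L, 0, 0) = P e" using \<open>i = 0 \<and> l < L\<close> True ed by (auto simp: P_def fun_eq_iff)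
      ultimately show ?thesis by blast
    next
      case False
      have "(Suc l, j, 0) \<in> Iset L h" using pos[of "Suc l"] m False \<open>i = 0 \<and> l < L\<close>
        by (auto simp: Iset_def edges_def)
      moreover have "P (Suc l, j, 0) = P e" using \<open>i = 0 \<and> l < L\<close> m ed
        by (auto simp: P_def fun_eq_iff)
      ultimately show ?thesis by blast
    qed
  qed
qed

lemma W_edges_span:
  assumes "L \<ge> 2" "\<forall>l\<le>L. h l \<ge> 1" "e \<in> edges L h"
  shows "W L e \<in> V.span (W L ` Iset L h)"
proof -
  obtain e' where "e' \<in> Iset L h" "P e' = P e" using P_edges_in[OF assms] by blast
  then have "W L e \<in> W L ` Iset L h" by (metis W_def image_eqI)
  then show ?thesis by (rule V.span_base)
qed

lemma cols_span:
  assumes "L \<ge> 2" "\<forall>l\<le>L. h l \<ge> 1" "p \<in> paths L h"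
  shows "path_vec L p \<in> V.span (W L ` Iset L h)"
proof -
  let ?S = "V.span (W L ` Iset L h)"
  have pp: "\<And>l. l \<le> L \<Longrightarrow> p l < h l" "\<And>l. l > L \<Longrightarrow> p l = 0" using assms(3) by (auto simp: paths_def)
  have pos: "\<And>l. l \<le> L \<Longrightarrow> 0 < h l" using assms(2) by fastforce
  have main: "t \<le> L \<Longrightarrow> path_vec L (\<lambda>k. if k \<le> t then p k else 0) \<in> ?S" for t
  proof (induction t)
    case 0
    have "(\<lambda>k. if k \<le> 0 then p k else 0) = P (1, p 0, 0)" by (auto simp: P_def fun_eq_iff)
    moreover have "(1, p 0, 0) \<in> edges L h" using pp(1)[of 0] pos[of 1] assms(1) by (auto simp: edges_def)
    ultimately show ?case using W_edges_span[OF assms(1,2)] by (simp add: W_def)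
  next
    case (Suc t)
    have e1: "(Suc t, p t, 0) \<in> edges L h" using pp(1)[of t] pos[of "Suc t"] Suc.prems by (auto simp: edges_def)
    have e2: "(Suc t, p t, p (Suc t)) \<in> edges L h" using pp(1)[of t] pp(1)[of "Suc t"] Suc.prems by (auto simp: edges_def)
    have eq: "path_vec L (\<lambda>k. if k \<le> Suc t then p k else 0) =
      path_vec L (\<lambda>k. if k \<le> t then p k else 0) + W L (Suc t, p t, p (Suc t)) - W L (Suc t, p t, 0)"
    proof
      fix x show "path_vec L (\<lambda>k. if k \<le> Suc t then p k else 0) x =
      (path_vec L (\<lambda>k. if k \<le> t then p k else 0) + W L (Suc t, p t, p (Suc t)) - W L (Suc t, p t, 0)) x"
        using step_id[of L t p x] by (simp add: W_def)
    qed
    have "path_vec L (\<lambda>k. if k \<le> t then p k else 0) \<in> ?S" using Suc by simp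
    then show ?case unfolding eq
      by (intro V.span_diff V.span_add W_edges_span[OF assms(1,2)] e1 e2)
  qed
  have "(\<lambda>k. if k \<le> L then p k else 0) = p" using pp(2) by (auto simp: fun_eq_iff)
  then show ?thesis using main[of L] by simp
qed

lemma lin_indep_imp: "lin_indep T \<Longrightarrow> \<not> V.dependent T"
proof
  assume li: "lin_indep T" and dep: "V.dependent T"
  then obtain t u v0 where t: "finite t" "t \<subseteq> T" "(\<Sum>v\<in>t. sc (u v) v) = 0" "v0 \<in> t" "u v0 \<noteq> 0"
    unfolding V.dependent_explicit by blast
  define c where "c v = (if v \<in> t then u v else 0)" for v
  have fin: "finite T" using li by (simp add: lin_indep_def)
  have "\<forall>e. (\<Sum>v\<in>T. c v * v e) = 0"
  proof
    fix e
    have "(\<Sum>v\<in>T. c v * v e) = (\<Sum>v\<in>T. if v \<in> t then u v * v e else 0)"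
      by (rule sum.cong) (auto simp: c_def)
    also have "\<dots> = (\<Sum>v\<in>T \<inter> t. u v * v e)" by (rule sum.inter_restrict[OF fin, symmetric])
    also have "T \<inter> t = t" using t(2) by blast
    also have "(\<Sum>v\<in>t. u v * v e) = (\<Sum>v\<in>t. sc (u v) v) e" by (simp add: sum_fun_apply sc_def)
    finally show "(\<Sum>v\<in>T. c v * v e) = 0" using t(3) by simp
  qed
  then have "c v0 = 0" using li t by (auto simp: lin_indep_def)
  then show False using t by (simp add: c_def)
qed

theorem theorem3p4:
  fixes L :: nat and h :: "nat \<Rightarrow> nat"
  assumes "L \<ge> 2"
    and "\<forall>l\<le>L. h l \<ge> 1"
  shows "structure_rank L h = num_weights L h - num_hidden L h"
proof -
  let ?S = "W L ` Iset L h"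
  have injW: "inj_on (W L) (Iset L h)" by (rule W_inj[OF assms])
  have finS: "finite ?S" using finite_Iset by simp
  have cardS: "card ?S = num_weights L h - num_hidden L h"
    using card_image[OF injW] card_Iset[OF assms] by simp
  have Ssub: "?S \<subseteq> structure_columns L h"
    using P_paths[OF assms(2)] by (auto simp: structure_columns_def W_def Iset_def)
  have liS: "lin_indep ?S"
    unfolding lin_indep_def
  proof (intro conjI allI impI finS)
    fix c assume hc: "\<forall>e. (\<Sum>v\<in>?S. c v * v e) = 0"
    have "\<forall>x. (\<Sum>e\<in>Iset L h. c (W L e) * W L e x) = 0"
    proof
      fix x
      have "(\<Sum>v\<in>?S. c v * v x) = (\<Sum>e\<in>Iset L h. c (W L e) * W L e x)"
        by (rule sum.reindex[OF injW, unfolded comp_def])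
      then show "(\<Sum>e\<in>Iset L h. c (W L e) * W L e x) = 0" using hc by simp
    qed
    from indep_coeffs[OF assms(1) this] show "\<forall>v\<in>?S. c v = 0" by blast
  qed
  let ?A = "{card S | S. S \<subseteq> structure_columns L h \<and> lin_indep S}"
  have ub: "y \<le> num_weights L h - num_hidden L h" if "y \<in> ?A" for y
  proof -
    have "\<exists>S. y = card S \<and> S \<subseteq> structure_columns L h \<and> lin_indep S" using that unfolding mem_Collect_eq .
    then obtain S where S: "y = card S" "S \<subseteq> structure_columns L h" "lin_indep S" by blast
    have "S \<subseteq> V.span ?S"
      using S(2) cols_span[OF assms] by (auto simp: structure_columns_def)
    then have "card S \<le> card ?S" using V.independent_span_bound[OF finS lin_indep_imp[OF S(3)]] by blast
    then show ?thesis using S(1) cardS by simp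
  qed
  have mem: "num_weights L h - num_hidden L h \<in> ?A"
    unfolding mem_Collect_eq
    by (rule exI[of _ ?S]) (intro conjI Ssub liS cardS[symmetric])
  have sub: "?A \<subseteq> {..num_weights L h - num_hidden L h}"
  proof
    fix y assume "y \<in> ?A"
    then show "y \<in> {..num_weights L h - num_hidden L h}" using ub[of y] by (simp only: atMost_iff)
  qed
  have fin: "finite ?A" by (rule finite_subset[OF sub finite_atMost])
  show ?thesis unfolding structure_rank_def
    by (rule Max_eqI[OF fin ub mem])
qed

end
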